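(* Let $M$ be a totally ordered finite monoid and $a,b,c\in M$ with $b\le_J a$. If $abc=ab$ then $bc=b$. Similarly, if $cba=ba$ then $cb=b$.
   Context: For $m$ in a monoid $M$, $J(m)=\{xmy:x,y\in M\}$. Write $a\le_J b$ iff $J(a)\subseteq J(b)$. A monoid $M$ is totally ordered if for all $a,b\in M$, $J(ab)=J(a)$ or $J(ab)=J(b)$. *)

theory Defs
  imports Main
begin

definition Jideal :: "'a::monoid_mult \<Rightarrow> 'a set" where
  "Jideal m = {x * m * y | x y. True}"

definition J_le :: "'a::monoid_mult \<Rightarrow> 'a \<Rightarrow> bool" where
  "J_le a b \<longleftrightarrow> Jideal a \<subseteq> Jideal b"

definition totally_ordered_monoid :: "'a::monoid_mult itself \<Rightarrow> bool" where
  "totally_ordered_monoid _ \<longleftrightarrow>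
     (\<forall>a b :: 'a. Jideal (a * b) = Jideal a \<or> Jideal (a * b) = Jideal b)"

end

theory Submission
  imports Defs
begin

lemma pow_iter:
  fixes b p t :: "'a::monoid_mult"
  assumes "b = p * b * t"
  shows "b = p ^ n * b * t ^ n"
proof (induction n)
  case 0 then show ?case by simp
next
  case (Suc n)
  have "p ^ Suc n * b * t ^ Suc n = p ^ n * (p * b * t) * t ^ n"
  proof -
    have 1: "p ^ Suc n = p ^ n * p" by (rule power_Suc2)
    have 2: "t ^ Suc n = t * t ^ n" by (rule power_Suc)
    show ?thesis unfolding 1 2 by (simp only: mult.assoc)
  qed
  then show ?case using Suc assms by simp
qed

lemma pow_rep:
  fixes f :: "nat \<Rightarrow> 'a::finite"
  shows "\<exists>i j. i < j \<and> f i = f j"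
proof -
  have "\<not> inj f"
  proof
    assume "inj f"
    then have "infinite (range f)" using finite_imageD by blast
    then show False by simp
  qed
  then obtain i j where "i \<noteq> j" "f i = f j" unfolding inj_def by blast
  then show ?thesis by (metis linorder_neqE_nat)
qed

lemma left_stab:
  fixes b p x q :: "'a::{monoid_mult,finite}"
  assumes "b = p * (x * b) * q"
  shows "\<exists>u. b = u * (x * b)"
proof -
  define s where "s = p * x"
  have b1: "b = s * b * q" using assms by (simp add: s_def mult.assoc)
  obtain i j where ij: "i < j" "s ^ i = s ^ j" using pow_rep[of "\<lambda>n. s ^ n"] by blast
  define d where "d = j - i"
  have d: "d \<ge> 1" "j = d + i" using ij d_def by auto
  have "s ^ d * b = s ^ d * (s ^ i * b * q ^ i)" using pow_iter[OF b1, of i] by simp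
  also have "\<dots> = s ^ j * b * q ^ i" by (simp add: d power_add mult.assoc)
  also have "\<dots> = b" using ij pow_iter[OF b1, of i] by simp
  finally have sb: "s ^ d * b = b" .
  obtain e where e: "d = Suc e" using d by (cases d) auto
  have "s ^ d = s ^ e * p * x" by (simp only: e power_Suc2 s_def mult.assoc)
  then have "b = s ^ e * p * (x * b)" using sb by (metis mult.assoc)
  then show ?thesis by blast
qed

lemma right_stab:
  fixes b p x q :: "'a::{monoid_mult,finite}"
  assumes "b = p * (b * x) * q"
  shows "\<exists>u. b = (b * x) * u"
proof -
  define t where "t = x * q"
  have b1: "b = p * b * t" using assms by (simp add: t_def mult.assoc)
  obtain i j where ij: "i < j" "t ^ i = t ^ j" using pow_rep[of "\<lambda>n. t ^ n"] by blast
  define d where "d = j - i"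
  have d: "d \<ge> 1" "j = i + d" using ij d_def by auto
  have "b * t ^ d = (p ^ i * b * t ^ i) * t ^ d" using pow_iter[OF b1, of i] by simp
  also have "\<dots> = p ^ i * b * t ^ j" by (simp add: d power_add mult.assoc)
  also have "\<dots> = b" using ij pow_iter[OF b1, of i] by simp
  finally have sb: "b * t ^ d = b" .
  obtain e where e: "d = Suc e" using d by (cases d) auto
  have "t ^ d = x * (q * t ^ e)" by (simp only: e power_Suc t_def mult.assoc)
  then have "b = (b * x) * (q * t ^ e)" using sb by (metis mult.assoc)
  then show ?thesis by blast
qed

lemma in_J_prod:
  fixes a b y :: "'a::monoid_mult"
  assumes tot: "totally_ordered_monoid TYPE('a)"
    and ba: "J_le b a" and y: "y = a * b \<or> y = b * a"
  shows "\<exists>p q. b = p * y * q"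
proof -
  have "b = 1 * b * 1" by simp
  then have "b \<in> Jideal b" unfolding Jideal_def by blast
  then have "b \<in> Jideal a" using ba unfolding J_le_def by blast
  then obtain x z where bxz: "b = x * a * z" unfolding Jideal_def by blast
  have ya: "Jideal y = Jideal a \<or> Jideal y = Jideal b" using tot y
    unfolding totally_ordered_monoid_def by blast
  show ?thesis
  proof (cases "Jideal y = Jideal b")
    case True
    with \<open>b \<in> Jideal b\<close> have "b \<in> Jideal y" by simp
    then show ?thesis unfolding Jideal_def by blast
  next
    case False
    then have "Jideal y = Jideal a" using ya by blast
    moreover have "a = 1 * a * 1" by simp
    then have "a \<in> Jideal a" unfolding Jideal_def by blast
    ultimately have "a \<in> Jideal y" by simp
    then obtain p q where "a = p * y * q" unfolding Jideal_def by blast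
    then have "b = (x * p) * y * (q * z)" using bxz by (simp add: mult.assoc)
    then show ?thesis by blast
  qed
qed

theorem lemma4p2:
  fixes a b c :: "'a::{monoid_mult, finite}"
  assumes "totally_ordered_monoid TYPE('a)"
    and "J_le b a"
  shows "(a * b * c = a * b \<longrightarrow> b * c = b) \<and> (c * b * a = b * a \<longrightarrow> c * b = b)"
proof (intro conjI impI)
  assume h: "a * b * c = a * b"
  obtain p q where "b = p * (a * b) * q" using in_J_prod[OF assms, of "a*b"] by blast
  then obtain u where u: "b = u * (a * b)" using left_stab by blast
  have "b * c = u * (a * b * c)" by (subst u) (simp add: mult.assoc)
  also have "\<dots> = b" using h u by simp
  finally show "b * c = b" .
next
  assume h: "c * b * a = b * a"
  obtain p q where "b = p * (b * a) * q" using in_J_prod[OF assms, of "b*a"] by blast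
  then obtain u where u: "b = (b * a) * u" using right_stab by blast
  have "c * b = (c * b * a) * u" by (subst u) (simp add: mult.assoc)
  also have "\<dots> = b" using h u by simp
  finally show "c * b = b" .
qed

end
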